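(* For all integers $0<k \leq \ell < n$, the polynomial \[ \overline{ { n \brack k}}_{q,t} \overline{ { n \brack \ell }}_{q,t} - \overline{ { n \brack k-1}}_{q,t} \overline{ { n \brack \ell +1}}_{q,t} \] has non-negative coefficients as a polynomial in $t$ and $q$.
   Context: An overpartition is a partition in which the last occurrence of each distinct part size may be overlined; its weight $|\lambda|$ is the sum of its parts. For integers $0\le b\le a$, $\overline{{a \brack b}}_{q,t}=\sum_{\lambda} t^{\#_o(\lambda)} q^{|\lambda|}$, the sum over all overpartitions $\lambda$ with largest part at most $a-b$ and at most $b$ parts, where $\#_o(\lambda)$ is the number of overlined parts of $\lambda$. *)

theory Defs
  imports "HOL-Library.Multiset" "HOL-Computational_Algebra.Polynomial"
begin

text \<open>An overpartition is encoded as a pair (P, S): P is the multiset of (positive)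
parts of the underlying partition, and S is the set of distinct part sizes whose
last occurrence is overlined (so S is a subset of the distinct parts of P).\<close>

definition overpartitions :: "nat \<Rightarrow> nat \<Rightarrow> (nat multiset \<times> nat set) set" where
  "overpartitions m b =
     {(P, S). (\<forall>x\<in>#P. 0 < x \<and> x \<le> m) \<and> size P \<le> b \<and> S \<subseteq> set_mset P}"

text \<open>Bivariate polynomials in t and q are represented as int poly poly:
the outer variable is t, the inner variable is q.  So the coefficient of
t^i q^j of F is  coeff (coeff F i) j.\<close>

definition obinom :: "nat \<Rightarrow> nat \<Rightarrow> int poly poly" where
  "obinom a b = (\<Sum>(P, S)\<in>overpartitions (a - b) b. monom (monom 1 (sum_mset P)) (card S))"

end

theory Submission
  imports Defs
begin

definition pos1 :: "int poly \<Rightarrow> bool" where "pos1 p \<longleftrightarrow> (\<forall>j. 0 \<le> coeff p j)"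
definition pos2 :: "int poly poly \<Rightarrow> bool" where "pos2 F \<longleftrightarrow> (\<forall>i. pos1 (coeff F i))"

lemma pos1_add: "pos1 p \<Longrightarrow> pos1 q \<Longrightarrow> pos1 (p + q)"
  by (simp add: pos1_def)
lemma pos1_sum: "(\<And>x. x \<in> A \<Longrightarrow> pos1 (f x)) \<Longrightarrow> pos1 (sum f A)"
  by (simp add: pos1_def coeff_sum sum_nonneg)
lemma pos1_mult: "pos1 p \<Longrightarrow> pos1 q \<Longrightarrow> pos1 (p * q)"
  by (simp add: pos1_def coeff_mult sum_nonneg)
lemma pos2_add: "pos2 p \<Longrightarrow> pos2 q \<Longrightarrow> pos2 (p + q)"
  by (simp add: pos2_def pos1_add)
lemma pos2_sum: "(\<And>x. x \<in> A \<Longrightarrow> pos2 (f x)) \<Longrightarrow> pos2 (sum f A)"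
  by (simp add: pos2_def coeff_sum pos1_sum)
lemma pos2_mult: "pos2 p \<Longrightarrow> pos2 q \<Longrightarrow> pos2 (p * q)"
  by (simp add: pos2_def coeff_mult pos1_sum pos1_mult)
lemma pos2_monom: "pos2 (monom (monom 1 s) c)"
  by (simp add: pos2_def pos1_def coeff_monom)
lemma pos2_0: "pos2 0" by (simp add: pos2_def pos1_def)
lemma pos2_1: "pos2 1" using pos2_monom[of 0 0] by simp
lemma pos2_power: "pos2 p \<Longrightarrow> pos2 (p ^ n)"
  by (induction n) (simp_all add: pos2_1 pos2_mult)

definition qq :: "int poly poly" where "qq = monom (monom 1 1) 0"
definition tt :: "int poly poly" where "tt = monom 1 1"
lemma pos2_qq: "pos2 qq" by (simp add: qq_def pos2_monom)
lemma pos2_tt: "pos2 tt" using pos2_monom[of 0 1] by (simp add: tt_def)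

lemma qq_power: "qq ^ n = monom (monom 1 n) 0"
  by (simp add: qq_def monom_power)

definition wt :: "nat multiset \<times> nat set \<Rightarrow> int poly poly" where
  "wt x = monom (monom 1 (sum_mset (fst x))) (card (snd x))"

definition gg :: "nat \<Rightarrow> nat \<Rightarrow> int poly poly" where
  "gg m b = sum wt (overpartitions m b)"

lemma obinom_gg: "obinom a b = gg (a - b) b"
  unfolding obinom_def gg_def wt_def by (simp add: case_prod_beta)

lemma finite_op: "finite (overpartitions m b)"
proof -
  have "overpartitions m b \<subseteq> (\<Union>n\<in>{..b}. multisets_of_size {1..m} n) \<times> Pow {1..m}"
    unfolding overpartitions_def multisets_of_size_def by force
  moreover have "finite ((\<Union>n\<in>{..b}. multisets_of_size {1..m} n) \<times> Pow {1..m})" by auto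
  ultimately show ?thesis by (rule finite_subset)
qed

lemma pos2_gg: "pos2 (gg m b)"
  unfolding gg_def wt_def by (rule pos2_sum) (rule pos2_monom)

lemma op_0b: "overpartitions 0 b = {({#}, {})}"
proof -
  have "\<And>P. (\<forall>x\<in>#P. 0 < x \<and> x \<le> (0::nat)) \<Longrightarrow> P = {#}"
    by (metis multiset_nonemptyE not_less_zero le_zero_eq)
  then show ?thesis unfolding overpartitions_def by auto
qed
lemma op_m0: "overpartitions m 0 = {({#}, {})}"
  unfolding overpartitions_def by auto
lemma gg_0b: "gg 0 b = 1" by (simp add: gg_def op_0b wt_def)
lemma gg_m0: "gg m 0 = 1" by (simp add: gg_def op_m0 wt_def)

lemma in_diff_neq: "x \<noteq> m \<Longrightarrow> x \<in># P \<Longrightarrow> x \<in># P - {#m#}"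
  by (metis diff_single_trivial insert_DiffM insert_noteq_member)

lemma cnt1_ins: "count P m = Suc 0 \<Longrightarrow> add_mset m (P - {#m#}) = P"
  using insert_DiffM[of m P] by (metis count_greater_zero_iff zero_less_Suc)

lemma gg_rec2:
  assumes m: "1 \<le> m" and b: "1 \<le> b"
  shows "gg m b = gg (m-1) b + qq^m * gg m (b-1) + tt * qq^m * gg (m-1) (b-1)"
proof -
  define OP where "OP = overpartitions m b"
  define A0 where "A0 = {x\<in>OP. m \<notin># fst x}"
  define A1 where "A1 = {x\<in>OP. m \<in># fst x \<and> \<not>(count (fst x) m = 1 \<and> m \<in> snd x)}"
  define A2 where "A2 = {x\<in>OP. count (fst x) m = 1 \<and> m \<in> snd x}"
  have fin: "finite A0" "finite A1" "finite A2"
    using finite_op[of m b] unfolding A0_def A1_def A2_def OP_def by auto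
  have split: "OP = A0 \<union> (A1 \<union> A2)"
    unfolding A0_def A1_def A2_def by auto
  have disj: "A0 \<inter> (A1 \<union> A2) = {}" "A1 \<inter> A2 = {}"
    unfolding A0_def A1_def A2_def by (auto simp: not_in_iff) (metis count_eq_zero_iff)+
  have s: "gg m b = sum wt A0 + (sum wt A1 + sum wt A2)"
    unfolding gg_def OP_def[symmetric] split
    using fin disj by (simp add: sum.union_disjoint)
  have e0: "A0 = overpartitions (m-1) b"
    unfolding A0_def OP_def overpartitions_def using m
  proof (safe)
    fix P S x assume a: "\<forall>x\<in>#P. 0 < x \<and> x \<le> m" "m \<notin># fst (P, S)" "x \<in># P"
    then have "x \<noteq> m" by auto
    then show "0 < x" "x \<le> m - 1" using a by auto
  next
    fix P S assume a: "\<forall>x\<in>#P. 0 < x \<and> x \<le> m - 1" "m \<in># fst (P, S)"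
    then have "m \<le> m - 1" by auto
    then show False using m by linarith
  qed auto
  have e1: "sum wt A1 = sum (\<lambda>x. qq^m * wt x) (overpartitions m (b-1))"
  proof (rule sum.reindex_bij_witness[where i="\<lambda>(P,S). (add_mset m P, S)" and j="\<lambda>(P,S). (P - {#m#}, S)"])
    fix a assume "a \<in> A1"
    then show "(case case a of (P, S) \<Rightarrow> (P - {#m#}, S) of (P, S) \<Rightarrow> (add_mset m P, S)) = a"
      unfolding A1_def by (auto split: prod.splits)
  next
    fix a assume a: "a \<in> A1"
    obtain P S where [simp]: "a = (P,S)" by fastforce
    have P: "\<forall>x\<in>#P. 0 < x \<and> x \<le> m" "size P \<le> b" "S \<subseteq> set_mset P" "m \<in># P"
        "\<not>(count P m = 1 \<and> m \<in> S)"
      using a unfolding A1_def OP_def overpartitions_def by auto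
    have "S \<subseteq> set_mset (P - {#m#})"
    proof
      fix s assume "s \<in> S"
      show "s \<in># P - {#m#}"
      proof (cases "s = m")
        case True
        then have "count P m \<noteq> 1" using P(5) \<open>s \<in> S\<close> by auto
        moreover have "count P m \<ge> 1" using P(4) by (simp add: Suc_le_eq)
        ultimately have "count P m > 1" by linarith
        then show ?thesis using True by (simp add: in_diff_count)
      next
        case False
        then show ?thesis using \<open>s \<in> S\<close> P(3) by (auto simp: in_diff_count)
      qed
    qed
    moreover have "size (P - {#m#}) \<le> b - 1" using P(2,4) by (simp add: size_Diff_singleton)
    moreover have "\<forall>x\<in>#P - {#m#}. 0 < x \<and> x \<le> m" using P(1) by (meson in_diffD)
    ultimately show "(case a of (P, S) \<Rightarrow> (P - {#m#}, S)) \<in> overpartitions m (b - 1)"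
      unfolding overpartitions_def by auto
  next
    fix a assume "a \<in> overpartitions m (b - 1)"
    then show "(case case a of (P, S) \<Rightarrow> (add_mset m P, S) of (P, S) \<Rightarrow> (P - {#m#}, S)) = a"
      by (auto split: prod.splits)
  next
    fix a assume a: "a \<in> overpartitions m (b - 1)"
    obtain P S where [simp]: "a = (P,S)" by fastforce
    have P: "\<forall>x\<in>#P. 0 < x \<and> x \<le> m" "size P \<le> b - 1" "S \<subseteq> set_mset P"
      using a unfolding overpartitions_def by auto
    show "(case a of (P, S) \<Rightarrow> (add_mset m P, S)) \<in> A1"
      unfolding A1_def OP_def overpartitions_def using P m b
      by (auto simp: count_eq_zero_iff)
  next
    fix a assume "a \<in> A1"
    then have "m \<in># fst a" unfolding A1_def by auto
    then show "qq ^ m * wt (case a of (P, S) \<Rightarrow> (P - {#m#}, S)) = wt a"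
      by (auto simp: wt_def qq_power mult_monom sum_mset.remove split: prod.splits)
  qed
  have e2: "sum wt A2 = sum (\<lambda>x. tt * qq^m * wt x) (overpartitions (m-1) (b-1))"
  proof (rule sum.reindex_bij_witness[where i="\<lambda>(P,S). (add_mset m P, insert m S)" and j="\<lambda>(P,S). (P - {#m#}, S - {m})"])
    fix a assume "a \<in> A2"
    then show "(case case a of (P, S) \<Rightarrow> (P - {#m#}, S - {m}) of (P, S) \<Rightarrow> (add_mset m P, insert m S)) = a"
      unfolding A2_def by (auto split: prod.splits simp: insert_absorb cnt1_ins)
  next
    fix a assume a: "a \<in> A2"
    obtain P S where [simp]: "a = (P,S)" by fastforce
    have P: "\<forall>x\<in>#P. 0 < x \<and> x \<le> m" "size P \<le> b" "S \<subseteq> set_mset P" "count P m = 1" "m \<in> S"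
      using a unfolding A2_def OP_def overpartitions_def by auto
    have mP: "m \<in># P" using P(4) by (metis count_greater_zero_iff zero_less_one)
    have c0: "count (P - {#m#}) m = 0" using P(4) by simp
    have "S - {m} \<subseteq> set_mset (P - {#m#})"
    proof
      fix s assume "s \<in> S - {m}"
      then show "s \<in># P - {#m#}" using P(3) in_diff_neq[of s m P] by blast
    qed
    moreover have "size (P - {#m#}) \<le> b - 1" using P(2) mP by (simp add: size_Diff_singleton)
    moreover have "\<forall>x\<in>#P - {#m#}. 0 < x \<and> x \<le> m - 1"
    proof
      fix x assume x: "x \<in># P - {#m#}"
      then have "x \<noteq> m" using c0 by (metis not_in_iff)
      moreover have "0 < x \<and> x \<le> m" using P(1) x by (meson in_diffD)
      ultimately show "0 < x \<and> x \<le> m - 1" by auto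
    qed
    ultimately show "(case a of (P, S) \<Rightarrow> (P - {#m#}, S - {m})) \<in> overpartitions (m - 1) (b - 1)"
      unfolding overpartitions_def by auto
  next
    fix a assume a: "a \<in> overpartitions (m - 1) (b - 1)"
    obtain P S where [simp]: "a = (P,S)" by fastforce
    have P: "\<forall>x\<in>#P. 0 < x \<and> x \<le> m - 1" "S \<subseteq> set_mset P"
      using a unfolding overpartitions_def by auto
    have "m \<notin> S" using P m by fastforce
    then show "(case case a of (P, S) \<Rightarrow> (add_mset m P, insert m S) of (P, S) \<Rightarrow> (P - {#m#}, S - {m})) = a"
      by auto
  next
    fix a assume a: "a \<in> overpartitions (m - 1) (b - 1)"
    obtain P S where [simp]: "a = (P,S)" by fastforce
    have P: "\<forall>x\<in>#P. 0 < x \<and> x \<le> m - 1" "size P \<le> b - 1" "S \<subseteq> set_mset P"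
      using a unfolding overpartitions_def by auto
    have "m \<notin># P" using P(1) m by fastforce
    then show "(case a of (P, S) \<Rightarrow> (add_mset m P, insert m S)) \<in> A2"
      unfolding A2_def OP_def overpartitions_def using P m b
      by (auto simp: count_eq_zero_iff)
  next
    fix a assume a: "a \<in> A2"
    obtain P S where [simp]: "a = (P,S)" by fastforce
    have P: "S \<subseteq> set_mset P" "count P m = 1" "m \<in> S"
      using a unfolding A2_def OP_def overpartitions_def by auto
    have fS: "finite S" using P(1) finite_subset by blast
    have "card S = Suc (card (S - {m}))" using card_Suc_Diff1[OF fS P(3)] by simp
    moreover have "sum_mset P = m + sum_mset (P - {#m#})"
      using P(2) by (metis count_eq_zero_iff sum_mset.remove zero_neq_one)
    ultimately show "tt * qq ^ m * wt (case a of (P, S) \<Rightarrow> (P - {#m#}, S - {m})) = wt a"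
      by (simp add: wt_def tt_def qq_power mult_monom)
  qed
  show ?thesis
    using s e0 e1 e2 by (simp add: gg_def sum_distrib_left)
qed


definition G :: "int \<Rightarrow> int \<Rightarrow> int poly poly" where
  "G a b = (if a < 0 \<or> b < 0 then 0 else gg (nat a) (nat b))"

lemma pos2_G: "pos2 (G a b)"
  by (simp add: G_def pos2_gg pos2_0)

lemma G_rec2:
  assumes "(a, b) \<noteq> (0, 0)"
  shows "G a b = G (a-1) b + qq^(nat a) * G a (b-1) + tt * qq^(nat a) * G (a-1) (b-1)"
proof (cases "a < 0 \<or> b < 0")
  case True
  then show ?thesis by (auto simp: G_def)
next
  case False
  then consider "a = 0" "b > 0" | "a > 0" "b = 0" | "a > 0" "b > 0" using assms by force
  then show ?thesis
  proof cases
    case 1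
    then show ?thesis by (simp add: G_def gg_0b)
  next
    case 2
    then show ?thesis by (simp add: G_def gg_m0)
  next
    case 3
    have "gg (nat a) (nat b) = gg (nat a - 1) (nat b) + qq ^ nat a * gg (nat a) (nat b - 1) +
      tt * qq ^ nat a * gg (nat a - 1) (nat b - 1)"
      using 3 by (intro gg_rec2) auto
    moreover have "nat (a - 1) = nat a - 1" "nat (b - 1) = nat b - 1" using 3 by auto
    ultimately show ?thesis using 3 by (simp add: G_def)
  qed
qed

lemma nat_p1 [simp]: "nat (int i + 1) = Suc i" by (simp add: nat_eq_iff)

definition D :: "int \<Rightarrow> int \<Rightarrow> int poly poly" where
  "D a b = G a b - (G a (b-1) + qq^(nat b) * G (a-1) b + tt * qq^(nat b) * G (a-1) (b-1))"

lemma D_step: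
  assumes "(i, j) \<noteq> (0::nat, 0::nat)"
  shows "D (int i + 1) (int j + 1) = D (int i) (int j + 1) + qq^(i+1) * D (int i + 1) (int j)
     + tt * qq^(i+1) * D (int i) (int j)"
proof -
  have r1: "G (int i + 1) (int j + 1) = G (int i) (int j + 1) + qq^(i+1) * G (int i + 1) (int j)
      + tt * qq^(i+1) * G (int i) (int j)"
    using G_rec2[of "int i + 1" "int j + 1"] by (simp add: nat_int_add)
  have r2: "G (int i + 1) (int j) = G (int i) (int j) + qq^(i+1) * G (int i + 1) (int j - 1)
      + tt * qq^(i+1) * G (int i) (int j - 1)"
    using G_rec2[of "int i + 1" "int j"] by (simp add: nat_int_add)
  have r3: "G (int i) (int j + 1) = G (int i - 1) (int j + 1) + qq^i * G (int i) (int j)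
      + tt * qq^i * G (int i - 1) (int j)"
    using G_rec2[of "int i" "int j + 1"] by simp
  have r4: "G (int i) (int j) = G (int i - 1) (int j) + qq^i * G (int i) (int j - 1)
      + tt * qq^i * G (int i - 1) (int j - 1)"
    using G_rec2[of "int i" "int j"] assms by simp
  show ?thesis
    unfolding D_def
    apply (simp add: nat_int_add)
    apply (simp only: r1 r2 r3 r4)
    apply (simp add: algebra_simps)
    done
qed


lemma D_zero_aux:
  "\<forall>a b. a + b \<le> int n \<longrightarrow> (a, b) \<noteq> (0, 0) \<longrightarrow> D a b = 0"
proof (induction n)
  case 0
  show ?case
  proof (intro allI impI)
    fix a b :: int assume h: "a + b \<le> int 0" "(a, b) \<noteq> (0, 0)"
    then have "a < 0 \<or> b < 0" by auto
    then show "D a b = 0" by (auto simp: D_def G_def)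
  qed
next
  case (Suc n)
  show ?case
  proof (intro allI impI)
    fix a b :: int assume h: "a + b \<le> int (Suc n)" "(a, b) \<noteq> (0, 0)"
    consider "a < 0 \<or> b < 0" | "a = 0" "b > 0" | "a > 0" "b = 0" | "a = 1" "b = 1"
      | "a \<ge> 1" "b \<ge> 1" "(a, b) \<noteq> (1, 1)"
      using h(2) by (smt (verit) prod.inject)
    then show "D a b = 0"
    proof cases
      case 1 then show ?thesis by (auto simp: D_def G_def)
    next
      case 2 then show ?thesis by (simp add: D_def G_def gg_0b)
    next
      case 3 then show ?thesis by (simp add: D_def G_def gg_m0)
    next
      case 4
      have "G 1 1 = G 0 1 + qq * G 1 0 + tt * qq * G 0 0"
        using G_rec2[of 1 1] by simp
      then show ?thesis using 4 by (simp add: D_def G_def gg_0b gg_m0)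
    next
      case 5
      define i where "i = nat (a - 1)"
      define j where "j = nat (b - 1)"
      have ij: "a = int i + 1" "b = int j + 1" using 5 unfolding i_def j_def by auto
      have nz: "(i, j) \<noteq> (0, 0)" using 5 ij by auto
      have IH1: "D (int i) (int j + 1) = 0" using Suc.IH h ij by auto
      have IH2: "D (int i + 1) (int j) = 0" using Suc.IH h ij by auto
      have IH3: "D (int i) (int j) = 0" using Suc.IH h ij nz by auto
      show ?thesis using D_step[OF nz] IH1 IH2 IH3 ij by simp
    qed
  qed
qed

lemma G_rec1:
  assumes "(a, b) \<noteq> (0, 0)"
  shows "G a b = G a (b-1) + qq^(nat b) * G (a-1) b + tt * qq^(nat b) * G (a-1) (b-1)"
proof -
  have "D a b = 0" using D_zero_aux[of "nat (a + b)"] assms by auto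
  then show ?thesis by (simp add: D_def)
qed


definition Pj :: "nat \<Rightarrow> int \<Rightarrow> int \<Rightarrow> int \<Rightarrow> int \<Rightarrow> int poly poly" where
  "Pj j a b c e = G a b * G c e - qq^j * G (a+1) (b-1) * G (c-1) (e+1)"

lemma qq_nat_suc: "x \<ge> 0 \<Longrightarrow> qq^(nat (x+1)) = qq * qq^(nat x)"
  by (simp add: nat_add_distrib)

lemma Id1:
  assumes "a \<ge> 0" "b \<ge> 1"
  shows "Pj j a b c e = Pj j (a-1) b c e + qq^(nat a) * Pj (Suc j) a (b-1) c e
           + tt * qq^(nat a) * Pj (Suc j) (a-1) (b-1) c e"
proof -
  have r1: "G a b = G (a-1) b + qq^(nat a) * G a (b-1) + tt * qq^(nat a) * G (a-1) (b-1)"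
    using G_rec2[of a b] assms by simp
  have r2: "G (a+1) (b-1) = G a (b-1) + qq^(nat (a+1)) * G (a+1) (b-1-1)
       + tt * qq^(nat (a+1)) * G a (b-1-1)"
    using G_rec2[of "a+1" "b-1"] assms by simp
  have pw: "qq^(nat (a+1)) = qq * qq^(nat a)" using assms qq_nat_suc by simp
  show ?thesis unfolding Pj_def r1 r2 pw by (simp add: algebra_simps)
qed

lemma Id2:
  assumes "a \<ge> 0" "b \<ge> 1"
  shows "Pj (Suc j) a b c e = Pj (Suc j) a (b-1) c e + qq^(nat b) * Pj j (a-1) b c e
           + tt * qq^(nat b) * Pj j (a-1) (b-1) c e"
proof -
  have r1: "G a b = G a (b-1) + qq^(nat b) * G (a-1) b + tt * qq^(nat b) * G (a-1) (b-1)"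
    using G_rec1[of a b] assms by simp
  have r2: "G (a+1) (b-1) = G (a+1) (b-1-1) + qq^(nat (b-1)) * G a (b-1)
       + tt * qq^(nat (b-1)) * G a (b-1-1)"
    using G_rec1[of "a+1" "b-1"] assms by simp
  have pw: "qq^(nat b) = qq * qq^(nat (b-1))" using assms qq_nat_suc[of "b-1"] by simp
  show ?thesis unfolding Pj_def r1 r2 pw by (simp add: algebra_simps)
qed

lemma Id3:
  assumes "c \<ge> 1" "e \<ge> 0"
  shows "Pj (Suc j) a b c e = Pj (Suc j) a b (c-1) e + qq^(nat c) * Pj j a b c (e-1)
           + tt * qq^(nat c) * Pj j a b (c-1) (e-1)"
proof -
  have r1: "G c e = G (c-1) e + qq^(nat c) * G c (e-1) + tt * qq^(nat c) * G (c-1) (e-1)"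
    using G_rec2[of c e] assms by simp
  have r2: "G (c-1) (e+1) = G (c-1-1) (e+1) + qq^(nat (c-1)) * G (c-1) (e+1-1)
       + tt * qq^(nat (c-1)) * G (c-1-1) (e+1-1)"
    using G_rec2[of "c-1" "e+1"] assms by simp
  have pw: "qq^(nat c) = qq * qq^(nat (c-1))" using assms qq_nat_suc[of "c-1"] by simp
  show ?thesis unfolding Pj_def r1 r2 pw by (simp add: algebra_simps)
qed

lemma Id4:
  assumes "c \<ge> 1" "e \<ge> 0"
  shows "Pj j a b c e = Pj j a b c (e-1) + qq^(nat e) * Pj (Suc j) a b (c-1) e
           + tt * qq^(nat e) * Pj (Suc j) a b (c-1) (e-1)"
proof -
  have r1: "G c e = G c (e-1) + qq^(nat e) * G (c-1) e + tt * qq^(nat e) * G (c-1) (e-1)"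
    using G_rec1[of c e] assms by simp
  have r2: "G (c-1) (e+1) = G (c-1) (e+1-1) + qq^(nat (e+1)) * G (c-1-1) (e+1)
       + tt * qq^(nat (e+1)) * G (c-1-1) (e+1-1)"
    using G_rec1[of "c-1" "e+1"] assms by simp
  have pw: "qq^(nat (e+1)) = qq * qq^(nat e)" using assms qq_nat_suc by simp
  show ?thesis unfolding Pj_def r1 r2 pw by (simp add: algebra_simps)
qed


lemma pos2_comb: "pos2 X \<Longrightarrow> pos2 Y \<Longrightarrow> pos2 Z \<Longrightarrow> pos2 (X + qq^k * Y + tt * qq^k * Z)"
  by (intro pos2_add pos2_mult pos2_power pos2_qq pos2_tt)

lemma main_aux:
  "\<forall>a b c e j. a + b + c + e \<le> int n \<longrightarrow> c \<le> a + 1 \<longrightarrow> b \<le> e + 1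
      \<longrightarrow> int j \<le> (a + 1 - c) + (e + 1 - b) \<longrightarrow> pos2 (Pj j a b c e)"
proof (induction n)
  case 0
  show ?case
  proof (intro allI impI)
    fix a b c e :: int and j :: nat
    assume h: "a + b + c + e \<le> int 0" "c \<le> a + 1" "b \<le> e + 1"
    then have "b < 1 \<or> c < 1" by linarith
    then have "G (a+1) (b-1) = 0 \<or> G (c-1) (e+1) = 0" by (auto simp: G_def)
    then have "Pj j a b c e = G a b * G c e" by (auto simp: Pj_def)
    then show "pos2 (Pj j a b c e)" by (simp add: pos2_mult pos2_G)
  qed
next
  case (Suc n)
  show ?case
  proof (intro allI impI)
    fix a b c e :: int and j :: nat
    assume h: "a + b + c + e \<le> int (Suc n)" "c \<le> a + 1" "b \<le> e + 1"
       "int j \<le> (a + 1 - c) + (e + 1 - b)"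
    have IH: "\<And>a b c e j. a + b + c + e \<le> int n \<Longrightarrow> c \<le> a + 1 \<Longrightarrow> b \<le> e + 1
      \<Longrightarrow> int j \<le> (a + 1 - c) + (e + 1 - b) \<Longrightarrow> pos2 (Pj j a b c e)"
      using Suc.IH by blast
    show "pos2 (Pj j a b c e)"
    proof (cases "b \<ge> 1 \<and> c \<ge> 1")
      case False
      then have "G (a+1) (b-1) = 0 \<or> G (c-1) (e+1) = 0" by (auto simp: G_def)
      then have "Pj j a b c e = G a b * G c e" by (auto simp: Pj_def)
      then show ?thesis by (simp add: pos2_mult pos2_G)
    next
      case True
      then have bc: "b \<ge> 1" "c \<ge> 1" by auto
      have ae: "a \<ge> 0" "e \<ge> 0" using h bc by linarith+
      show ?thesis
      proof (cases "a + 1 - c \<ge> 1")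
        case x1: True
        show ?thesis
        proof (cases "int j \<le> (a + 1 - c) + (e + 1 - b) - 1")
          case True
          have "pos2 (Pj j (a-1) b c e)" by (rule IH) (use h x1 True in linarith)+
          moreover have "pos2 (Pj (Suc j) a (b-1) c e)" by (rule IH) (use h x1 True in linarith)+
          moreover have "pos2 (Pj (Suc j) (a-1) (b-1) c e)" by (rule IH) (use h x1 True in linarith)+
          ultimately show ?thesis using Id1[OF ae(1) bc(1), of j c e] by (simp add: pos2_comb)
        next
          case False
          then have "j \<noteq> 0" using h x1 by auto
          then obtain j' where j: "j = Suc j'" using not0_implies_Suc by blast
          have "pos2 (Pj (Suc j') a (b-1) c e)" by (rule IH) (use h x1 j in linarith)+
          moreover have "pos2 (Pj j' (a-1) b c e)" by (rule IH) (use h x1 j in linarith)+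
          moreover have "pos2 (Pj j' (a-1) (b-1) c e)" by (rule IH) (use h x1 j in linarith)+
          ultimately show ?thesis using Id2[OF ae(1) bc(1), of j' c e] j by (simp add: pos2_comb)
        qed
      next
        case x0: False
        show ?thesis
        proof (cases "e + 1 - b \<ge> 1")
          case y1: True
          show ?thesis
          proof (cases j)
            case (Suc j')
            have "pos2 (Pj (Suc j') a b (c-1) e)" by (rule IH) (use h y1 Suc in linarith)+
            moreover have "pos2 (Pj j' a b c (e-1))" by (rule IH) (use h y1 Suc in linarith)+
            moreover have "pos2 (Pj j' a b (c-1) (e-1))" by (rule IH) (use h y1 Suc in linarith)+
            ultimately show ?thesis using Id3[OF bc(2) ae(2), of j' a b] Suc by (simp add: pos2_comb)
          next
            case 0
            have "pos2 (Pj 0 a b c (e-1))" by (rule IH) (use h y1 0 in linarith)+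
            moreover have "pos2 (Pj (Suc 0) a b (c-1) e)" by (rule IH) (use h y1 x0 0 in linarith)+
            moreover have "pos2 (Pj (Suc 0) a b (c-1) (e-1))" by (rule IH) (use h y1 x0 0 in linarith)+
            ultimately show ?thesis using Id4[OF bc(2) ae(2), of 0 a b] 0 by (simp add: pos2_comb)
          qed
        next
          case y0: False
          have "c = a + 1" "e = b - 1" "j = 0" using h x0 y0 by linarith+
          then have "Pj j a b c e = 0" by (simp add: Pj_def)
          then show ?thesis by (simp add: pos2_0)
        qed
      qed
    qed
  qed
qed

lemma main:
  assumes "c \<le> a + 1" "b \<le> e + 1" "int j \<le> (a + 1 - c) + (e + 1 - b)"
  shows "pos2 (Pj j a b c e)"
  using main_aux[of "nat (a + b + c + e)"] assms by auto

theorem theorem1p5: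
  fixes n k l :: nat
  assumes "0 < k" and "k \<le> l" and "l < n"
  shows "\<forall>i j. 0 \<le> coeff (coeff (obinom n k * obinom n l - obinom n (k - 1) * obinom n (l + 1)) i) j"
proof -
  have e1: "obinom n k = G (int n - int k) (int k)"
    using assms by (simp add: obinom_gg G_def nat_diff_distrib of_nat_diff)
  have e2: "obinom n l = G (int n - int l) (int l)"
    using assms by (simp add: obinom_gg G_def nat_diff_distrib of_nat_diff)
  have e3: "obinom n (k - 1) = G (int n - int k + 1) (int k - 1)"
  proof -
    have h1: "nat (int n - int k + 1) = n - (k - 1)" "nat (int k - 1) = k - 1" using assms by auto
    have c: "\<not> (int n - int k + 1 < 0 \<or> int k - 1 < 0)" using assms by auto
    have "G (int n - int k + 1) (int k - 1) = gg (nat (int n - int k + 1)) (nat (int k - 1))"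
      unfolding G_def using c by (rule if_not_P)
    then show ?thesis by (simp only: obinom_gg h1)
  qed
  have e4: "obinom n (l + 1) = G (int n - int l - 1) (int l + 1)"
  proof -
    have h1: "nat (int n - int l - 1) = n - (l + 1)" "nat (int l + 1) = l + 1" using assms by auto
    have c: "\<not> (int n - int l - 1 < 0 \<or> int l + 1 < 0)" using assms by auto
    have "G (int n - int l - 1) (int l + 1) = gg (nat (int n - int l - 1)) (nat (int l + 1))"
      unfolding G_def using c by (rule if_not_P)
    then show ?thesis by (simp only: obinom_gg h1)
  qed
  have "pos2 (Pj 0 (int n - int k) (int k) (int n - int l) (int l))"
    by (rule main) (use assms in auto)
  then have "pos2 (obinom n k * obinom n l - obinom n (k - 1) * obinom n (l + 1))"
    unfolding e1 e2 e3 e4 Pj_def by (simp add: algebra_simps)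
  then show ?thesis by (simp add: pos2_def pos1_def)
qed

end
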